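(* Consider the model $Y=g(X)+\varepsilon$ with $E[\varepsilon\mid Z]=0$ a.s. and $g\in L_2(X)$, where $X=(1,X_2)'$ and $X_2\in\{0,1\}$ is a binary (possibly endogenous) variable. Assume $E[Y^2]<\infty$, $0<\bar\pi<1$ and $\mathrm{var}(\pi(Z))>0$. Then there exists $h\in L_2(Z)^2$ with $E[h(Z)\mid X]=X$ a.s. Moreover, the minimum-norm solution $h_0$ of this equation has second component (the one corresponding to $X_2$) $$h_0(z)=\alpha+\gamma\pi(z),\qquad \gamma=\frac{\bar\pi(1-\bar\pi)}{\mathrm{var}(\pi(Z))},\quad \alpha=\bar\pi(1-\gamma).$$ Furthermore, the OLIVA $\beta=E[XX']^{-1}E[Xg(X)]$ equals $\beta=(c^{IV}_\pi,\alpha^{IV}_\pi)'$, where $$\alpha^{IV}_\pi=\frac{\mathrm{Cov}(Y,\pi(Z))}{\mathrm{Cov}(X_2,\pi(Z))},\qquad c^{IV}_\pi=E[Y]-\alpha^{IV}_\pi\bar\pi .$$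
   Context: $\pi(z)=\Pr(X_2=1\mid Z=z)$ is the propensity score, and $\bar\pi=\Pr(X_2=1)$. $L_2(V)$ denotes the square-integrable measurable functions of $V$. The minimum-norm solution is the solution of minimal $L_2(Z)$-norm, taken componentwise. *)

theory Defs
  imports "HOL-Analysis.Analysis" "HOL-Probability.Probability"
begin

definition Xvec :: "('a \<Rightarrow> real) \<Rightarrow> 'a \<Rightarrow> real^2" where
  "Xvec X2 \<omega> = vector [1, X2 \<omega>]"

definition cexpX :: "'a measure \<Rightarrow> ('a \<Rightarrow> real) \<Rightarrow> ('a \<Rightarrow> real) \<Rightarrow> 'a \<Rightarrow> real" where
  "cexpX M X2 f = real_cond_exp M (vimage_algebra (space M) (Xvec X2) borel) f"

definition cexpZ :: "'a measure \<Rightarrow> ('a \<Rightarrow> 'b) \<Rightarrow> 'b measure \<Rightarrow> ('a \<Rightarrow> real) \<Rightarrow> 'a \<Rightarrow> real" where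
  "cexpZ M Z N f = real_cond_exp M (vimage_algebra (space M) Z N) f"

definition L2Z :: "'a measure \<Rightarrow> ('a \<Rightarrow> 'b) \<Rightarrow> 'b measure \<Rightarrow> ('b \<Rightarrow> real) \<Rightarrow> bool" where
  "L2Z M Z N h \<longleftrightarrow> h \<in> borel_measurable N \<and> integrable M (\<lambda>\<omega>. (h (Z \<omega>))\<^sup>2)"

definition solves :: "'a measure \<Rightarrow> ('a \<Rightarrow> real) \<Rightarrow> ('a \<Rightarrow> 'b) \<Rightarrow> 'b measure
    \<Rightarrow> ('a \<Rightarrow> real) \<Rightarrow> ('b \<Rightarrow> real) \<Rightarrow> bool" where
  "solves M X2 Z N T h \<longleftrightarrow> L2Z M Z N h \<and> (AE \<omega> in M. cexpX M X2 (\<lambda>\<omega>. h (Z \<omega>)) \<omega> = T \<omega>)"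

definition min_norm_solution :: "'a measure \<Rightarrow> ('a \<Rightarrow> real) \<Rightarrow> ('a \<Rightarrow> 'b) \<Rightarrow> 'b measure
    \<Rightarrow> ('a \<Rightarrow> real) \<Rightarrow> ('b \<Rightarrow> real) \<Rightarrow> bool" where
  "min_norm_solution M X2 Z N T h \<longleftrightarrow> solves M X2 Z N T h \<and>
     (\<forall>h'. solves M X2 Z N T h' \<longrightarrow>
        (\<integral>\<omega>. (h (Z \<omega>))\<^sup>2 \<partial>M) \<le> (\<integral>\<omega>. (h' (Z \<omega>))\<^sup>2 \<partial>M))"

definition cov :: "'a measure \<Rightarrow> ('a \<Rightarrow> real) \<Rightarrow> ('a \<Rightarrow> real) \<Rightarrow> real" where
  "cov M U V = (\<integral>\<omega>. (U \<omega> - (\<integral>x. U x \<partial>M)) * (V \<omega> - (\<integral>x. V x \<partial>M)) \<partial>M)"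

definition var :: "'a measure \<Rightarrow> ('a \<Rightarrow> real) \<Rightarrow> real" where
  "var M U = (\<integral>\<omega>. (U \<omega> - (\<integral>x. U x \<partial>M))\<^sup>2 \<partial>M)"

end

theory Submission
  imports Defs
begin

lemma sq_integrable_imp_integrable:
  fixes f :: "'a \<Rightarrow> real"
  assumes "prob_space M" "f \<in> borel_measurable M" "integrable M (\<lambda>x. (f x)\<^sup>2)"
  shows "integrable M f"
proof -
  interpret prob_space M by fact
  have i: "integrable M (\<lambda>x. 1 + (f x)\<^sup>2)" using assms(3) by simp
  show ?thesis
  proof (rule Bochner_Integration.integrable_bound[OF i assms(2)])
    show "AE x in M. norm (f x) \<le> norm (1 + (f x)\<^sup>2)"
    proof (rule AE_I2)
      fix x
      have "\<bar>f x\<bar> \<le> 1 + (f x)\<^sup>2"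
      proof (cases "\<bar>f x\<bar> \<le> 1")
        case True then show ?thesis by (smt (verit) zero_le_power2)
      next
        case False
        then have "\<bar>f x\<bar> * 1 \<le> \<bar>f x\<bar> * \<bar>f x\<bar>" by (intro mult_left_mono) auto
        then show ?thesis by (simp add: power2_eq_square abs_mult_self_eq)
      qed
      then show "norm (f x) \<le> norm (1 + (f x)\<^sup>2)" by simp
    qed
  qed
qed

lemma integrable_mult_bounded:
  fixes f g :: "'a \<Rightarrow> real"
  assumes "integrable M f" "g \<in> borel_measurable M" "AE x in M. \<bar>g x\<bar> \<le> 1"
  shows "integrable M (\<lambda>x. f x * g x)"
proof (rule Bochner_Integration.integrable_bound[OF assms(1)])
  show "(\<lambda>x. f x * g x) \<in> borel_measurable M"
    using assms(1,2) by (simp add: borel_measurable_integrable borel_measurable_times)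
  show "AE x in M. norm (f x * g x) \<le> norm (f x)"
    using assms(3) by eventually_elim (auto simp: abs_mult intro: mult_left_le)
qed

lemma cov_expand:
  assumes "prob_space M" "integrable M U" "integrable M V" "integrable M (\<lambda>x. U x * V x)"
  shows "cov M U V = (\<integral>x. U x * V x \<partial>M) - (\<integral>x. U x \<partial>M) * (\<integral>x. V x \<partial>M)"
proof -
  interpret prob_space M by fact
  have p1: "measure M (space M) = 1" using assms(1) by (simp add: prob_space.prob_space)
  define a where "a = (\<integral>x. U x \<partial>M)"
  define b where "b = (\<integral>x. V x \<partial>M)"
  have "cov M U V = (\<integral>x. (U x * V x - b * U x) - (a * V x - a * b) \<partial>M)"
    unfolding cov_def a_def[symmetric] b_def[symmetric]
    by (rule Bochner_Integration.integral_cong) (auto simp: algebra_simps)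
  also have "\<dots> = (\<integral>x. U x * V x \<partial>M) - b * a - (a * b - a * b)"
    using assms by (simp add: integral_diff integral_mult_right a_def b_def p1)
  finally show ?thesis by (simp add: a_def b_def)
qed

theorem proposition3:
  fixes M :: "'a measure" and N :: "'b measure"
    and Y X2 :: "'a \<Rightarrow> real" and Z :: "'a \<Rightarrow> 'b"
    and g :: "real^2 \<Rightarrow> real" and \<pi> :: "'b \<Rightarrow> real"
    and \<pi>bar \<gamma> \<alpha> \<alpha>IV cIV :: real and \<beta> :: "real^2"
  assumes prob: "prob_space M"
    and Y_meas: "Y \<in> borel_measurable M"
    and Y_sq: "integrable M (\<lambda>\<omega>. (Y \<omega>)\<^sup>2)"
    and X2_meas: "X2 \<in> borel_measurable M"
    and X2_bin: "\<forall>\<omega>\<in>space M. X2 \<omega> \<in> {0, 1}"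
    and Z_meas: "Z \<in> measurable M N"
    and g_meas: "g \<in> borel_measurable borel"
    and g_L2: "integrable M (\<lambda>\<omega>. (g (Xvec X2 \<omega>))\<^sup>2)"
    and model: "AE \<omega> in M. cexpZ M Z N (\<lambda>\<omega>. Y \<omega> - g (Xvec X2 \<omega>)) \<omega> = 0"
    and \<pi>_meas: "\<pi> \<in> borel_measurable N"
    and \<pi>_def: "AE \<omega> in M. \<pi> (Z \<omega>) = cexpZ M Z N (\<lambda>\<omega>. if X2 \<omega> = 1 then 1 else 0) \<omega>"
    and \<pi>bar_def: "\<pi>bar = measure M {\<omega> \<in> space M. X2 \<omega> = 1}"
    and \<pi>bar_pos: "0 < \<pi>bar" and \<pi>bar_lt1: "\<pi>bar < 1"
    and var_pos: "var M (\<lambda>\<omega>. \<pi> (Z \<omega>)) > 0"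
    and \<gamma>_def: "\<gamma> = \<pi>bar * (1 - \<pi>bar) / var M (\<lambda>\<omega>. \<pi> (Z \<omega>))"
    and \<alpha>_def: "\<alpha> = \<pi>bar * (1 - \<gamma>)"
    and \<beta>_def: "\<beta> = matrix_inv (\<chi> i j. \<integral>\<omega>. Xvec X2 \<omega> $ i * Xvec X2 \<omega> $ j \<partial>M)
                     *v (\<chi> i. \<integral>\<omega>. Xvec X2 \<omega> $ i * g (Xvec X2 \<omega>) \<partial>M)"
    and \<alpha>IV_def: "\<alpha>IV = cov M Y (\<lambda>\<omega>. \<pi> (Z \<omega>)) / cov M X2 (\<lambda>\<omega>. \<pi> (Z \<omega>))"
    and cIV_def: "cIV = (\<integral>\<omega>. Y \<omega> \<partial>M) - \<alpha>IV * \<pi>bar"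
  shows "(\<exists>h1 h2. solves M X2 Z N (\<lambda>\<omega>. 1) h1 \<and> solves M X2 Z N X2 h2)
       \<and> min_norm_solution M X2 Z N X2 (\<lambda>z. \<alpha> + \<gamma> * \<pi> z)
       \<and> (\<forall>h0. min_norm_solution M X2 Z N X2 h0 \<longrightarrow>
              (AE \<omega> in M. h0 (Z \<omega>) = \<alpha> + \<gamma> * \<pi> (Z \<omega>)))
       \<and> \<beta> = vector [cIV, \<alpha>IV]"
proof -
  interpret prob_space M by (rule prob)
  have p1: "measure M (space M) = 1" by (rule prob_space)
  define FX where "FX = vimage_algebra (space M) (Xvec X2) borel"
  define FZ where "FZ = vimage_algebra (space M) Z N"
  define P where "P = (\<lambda>\<omega>. \<pi> (Z \<omega>))"
  define I where "I = (\<lambda>\<omega>. if X2 \<omega> = 1 then 1 else (0::real))"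
  note [measurable] = Y_meas X2_meas Z_meas g_meas \<pi>_meas
  have Xvec_eq: "Xvec X2 = (\<lambda>\<omega>. vector [1, 0] + X2 \<omega> *\<^sub>R vector [0, 1])"
    by (auto simp: Xvec_def vec_eq_iff forall_2)
  have Xvec_meas[measurable]: "Xvec X2 \<in> borel_measurable M"
    unfolding Xvec_eq by measurable
  have subX: "subalgebra M FX"
    unfolding subalgebra_def FX_def
    using sets_image_in_sets[OF refl Xvec_meas] by auto
  have subZ: "subalgebra M FZ"
    unfolding subalgebra_def FZ_def
    using sets_image_in_sets[OF refl Z_meas] by auto
  interpret SX: finite_measure_subalgebra M FX by unfold_locales (rule subX)
  interpret SZ: finite_measure_subalgebra M FZ by unfold_locales (rule subZ)
  have XvecF: "Xvec X2 \<in> measurable FX borel"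
    unfolding FX_def by (rule measurable_vimage_algebra1) auto
  have X2F[measurable]: "X2 \<in> borel_measurable FX"
  proof -
    have "(\<lambda>\<omega>. Xvec X2 \<omega> \<bullet> axis 2 1) \<in> borel_measurable FX"
      using XvecF by measurable
    moreover have "\<And>\<omega>. Xvec X2 \<omega> \<bullet> axis 2 1 = X2 \<omega>"
      by (simp add: Xvec_def inner_axis)
    ultimately show ?thesis by simp
  qed
  have ZF: "Z \<in> measurable FZ N"
    unfolding FZ_def by (rule measurable_vimage_algebra1) (use measurable_space[OF Z_meas] in blast)
  have hZF: "(\<lambda>\<omega>. h (Z \<omega>)) \<in> borel_measurable FZ" if "h \<in> borel_measurable N" for h
    using measurable_compose[OF ZF that] .
  have PF[measurable]: "P \<in> borel_measurable FZ" unfolding P_def by (rule hZF) simp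
  have P_meas[measurable]: "P \<in> borel_measurable M" unfolding P_def by measurable
  have X2I: "X2 \<omega> = I \<omega>" if "\<omega> \<in> space M" for \<omega>
    using X2_bin that unfolding I_def by auto
  have I_meas[measurable]: "I \<in> borel_measurable M" unfolding I_def by measurable
  have I_int: "integrable M I"
    by (rule Bochner_Integration.integrable_bound[of _ "\<lambda>_. 1::real"]) (auto simp: I_def)
  have X2_int: "integrable M X2"
    using Bochner_Integration.integrable_cong[of M M X2 I] I_int X2I by simp
  have X2_bd: "AE \<omega> in M. \<bar>X2 \<omega>\<bar> \<le> 1"
    using X2_bin by (intro AE_I2) auto
  have pibar_int: "\<pi>bar = (\<integral>\<omega>. X2 \<omega> \<partial>M)"
  proof -
    have "(\<integral>\<omega>. X2 \<omega> \<partial>M) = (\<integral>\<omega>. indicator {\<omega> \<in> space M. X2 \<omega> = 1} \<omega> \<partial>M)"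
      by (rule Bochner_Integration.integral_cong) (use X2_bin in \<open>auto simp: indicator_def\<close>)
    also have "\<dots> = \<pi>bar" by (simp add: \<pi>bar_def)
    finally show ?thesis ..
  qed
  have pibar_I: "\<pi>bar = (\<integral>\<omega>. I \<omega> \<partial>M)"
    unfolding pibar_int by (rule Bochner_Integration.integral_cong) (auto simp: X2I)
  have P_ae: "AE \<omega> in M. P \<omega> = real_cond_exp M FZ I \<omega>"
    using \<pi>_def unfolding P_def cexpZ_def FZ_def I_def .
  have P_bd: "AE \<omega> in M. 0 \<le> P \<omega> \<and> P \<omega> \<le> 1"
  proof -
    have "AE \<omega> in M. real_cond_exp M FZ I \<omega> \<ge> 0"
      by (rule SZ.real_cond_exp_ge_c[OF I_int]) (auto simp: I_def)
    moreover have "AE \<omega> in M. real_cond_exp M FZ I \<omega> \<le> 1"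
      by (rule SZ.real_cond_exp_le_c[OF I_int]) (auto simp: I_def)
    ultimately show ?thesis using P_ae by eventually_elim auto
  qed
  have P_bd1: "AE \<omega> in M. \<bar>P \<omega>\<bar> \<le> 1" using P_bd by eventually_elim auto
  have P_int: "integrable M P"
    by (rule Bochner_Integration.integrable_bound[of _ "\<lambda>_. 1::real"]) (use P_bd1 in auto)
  have PP_int: "integrable M (\<lambda>\<omega>. P \<omega> * P \<omega>)"
    by (rule integrable_mult_bounded[OF P_int P_meas P_bd1])
  have EP: "(\<integral>\<omega>. P \<omega> \<partial>M) = \<pi>bar"
  proof -
    have "(\<integral>\<omega>. P \<omega> \<partial>M) = (\<integral>\<omega>. real_cond_exp M FZ I \<omega> \<partial>M)"
      by (rule integral_cong_AE) (use P_ae in auto)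
    also have "\<dots> = \<pi>bar" using SZ.real_cond_exp_int(2)[OF I_int] pibar_I by simp
    finally show ?thesis .
  qed
  define m2 where "m2 = (\<integral>\<omega>. P \<omega> * X2 \<omega> \<partial>M)"
  have EPP: "(\<integral>\<omega>. P \<omega> * P \<omega> \<partial>M) = m2"
  proof -
    have "(\<integral>\<omega>. P \<omega> * P \<omega> \<partial>M) = (\<integral>\<omega>. P \<omega> * real_cond_exp M FZ I \<omega> \<partial>M)"
      by (rule integral_cong_AE) (use P_ae in auto)
    also have "\<dots> = (\<integral>\<omega>. P \<omega> * I \<omega> \<partial>M)"
      by (rule SZ.real_cond_exp_intg(2)) (auto intro: integrable_mult_bounded[OF P_int] simp: I_def)
    also have "\<dots> = m2" unfolding m2_def by (rule Bochner_Integration.integral_cong) (auto simp: X2I)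
    finally show ?thesis .
  qed
  have varP: "var M P = m2 - \<pi>bar\<^sup>2"
  proof -
    have "var M P = cov M P P" unfolding var_def cov_def by (simp add: power2_eq_square)
    also have "\<dots> = m2 - \<pi>bar\<^sup>2" using cov_expand[OF prob P_int P_int PP_int] EPP EP
      by (simp add: power2_eq_square)
    finally show ?thesis .
  qed
  have varP': "var M (\<lambda>\<omega>. \<pi> (Z \<omega>)) = m2 - \<pi>bar\<^sup>2" using varP unfolding P_def .

  have aXZ: "(\<integral>\<omega>. h (Z \<omega>) * X2 \<omega> \<partial>M) = (\<integral>\<omega>. h (Z \<omega>) * P \<omega> \<partial>M)"
    if hm: "h \<in> borel_measurable N" and hi: "integrable M (\<lambda>\<omega>. h (Z \<omega>))" for h
  proof -
    have hF: "(\<lambda>\<omega>. h (Z \<omega>)) \<in> borel_measurable FZ" by (rule hZF[OF hm])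
    have hM[measurable]: "(\<lambda>\<omega>. h (Z \<omega>)) \<in> borel_measurable M" using hm by measurable
    have "(\<integral>\<omega>. h (Z \<omega>) * X2 \<omega> \<partial>M) = (\<integral>\<omega>. h (Z \<omega>) * I \<omega> \<partial>M)"
      by (rule Bochner_Integration.integral_cong) (auto simp: X2I)
    also have "\<dots> = (\<integral>\<omega>. h (Z \<omega>) * real_cond_exp M FZ I \<omega> \<partial>M)"
      by (rule SZ.real_cond_exp_intg(2)[symmetric, OF _ hF I_meas])
         (rule integrable_mult_bounded[OF hi I_meas], auto simp: I_def)
    also have "\<dots> = (\<integral>\<omega>. h (Z \<omega>) * P \<omega> \<partial>M)"
      by (rule integral_cong_AE) (use P_ae in auto)
    finally show ?thesis .
  qed
  have setint: "(\<integral>\<omega>\<in>A. f \<omega> \<partial>M) = indicator B (vector [1, 1] :: real^2) * (\<integral>\<omega>. X2 \<omega> * f \<omega> \<partial>M)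
        + indicator B (vector [1, 0] :: real^2) * ((\<integral>\<omega>. f \<omega> \<partial>M) - (\<integral>\<omega>. X2 \<omega> * f \<omega> \<partial>M))"
    if fi: "integrable M f" and A: "A = Xvec X2 -` B \<inter> space M" for f A B
  proof -
    have xfi: "integrable M (\<lambda>\<omega>. X2 \<omega> * f \<omega>)"
      using integrable_mult_bounded[OF fi X2_meas X2_bd] by (simp add: mult.commute)
    have "(\<integral>\<omega>\<in>A. f \<omega> \<partial>M) = (\<integral>\<omega>. indicator B (vector [1, 1] :: real^2) * (X2 \<omega> * f \<omega>)
        + indicator B (vector [1, 0] :: real^2) * (f \<omega> - X2 \<omega> * f \<omega>) \<partial>M)"
      unfolding set_lebesgue_integral_def
    proof (rule Bochner_Integration.integral_cong)
      fix \<omega> assume w: "\<omega> \<in> space M"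
      show "indicator A \<omega> *\<^sub>R f \<omega> = indicator B (vector [1, 1] :: real^2) * (X2 \<omega> * f \<omega>)
        + indicator B (vector [1, 0] :: real^2) * (f \<omega> - X2 \<omega> * f \<omega>)"
        using X2_bin w unfolding A by (auto simp: Xvec_def indicator_def)
    qed simp
    also have "\<dots> = indicator B (vector [1, 1] :: real^2) * (\<integral>\<omega>. X2 \<omega> * f \<omega> \<partial>M)
        + indicator B (vector [1, 0] :: real^2) * ((\<integral>\<omega>. f \<omega> \<partial>M) - (\<integral>\<omega>. X2 \<omega> * f \<omega> \<partial>M))"
      using fi xfi by (simp add: integral_add integral_diff)
    finally show ?thesis .
  qed
  have setsFX: "\<exists>B. A = Xvec X2 -` B \<inter> space M" if "A \<in> sets FX" for A
  proof -
    have "Xvec X2 \<in> space M \<rightarrow> space (borel :: (real^2) measure)" by simp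
    from sets_vimage_algebra2[OF this] that show ?thesis unfolding FX_def by auto
  qed
  have EX2X2: "(\<integral>\<omega>. X2 \<omega> * X2 \<omega> \<partial>M) = \<pi>bar"
    unfolding pibar_int by (rule Bochner_Integration.integral_cong) (use X2_bin in auto)
  have solves_iff: "solves M X2 Z N X2 h \<longleftrightarrow>
      (\<integral>\<omega>. h (Z \<omega>) \<partial>M) = \<pi>bar \<and> (\<integral>\<omega>. h (Z \<omega>) * P \<omega> \<partial>M) = \<pi>bar"
    if L2: "L2Z M Z N h" for h
  proof -
    have hm[measurable]: "h \<in> borel_measurable N" using L2 unfolding L2Z_def by simp
    have hM[measurable]: "(\<lambda>\<omega>. h (Z \<omega>)) \<in> borel_measurable M" by measurable
    have hi: "integrable M (\<lambda>\<omega>. h (Z \<omega>))"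
      by (rule sq_integrable_imp_integrable[OF prob hM]) (use L2 in \<open>simp add: L2Z_def\<close>)
    have xhi: "integrable M (\<lambda>\<omega>. X2 \<omega> * h (Z \<omega>))"
      using integrable_mult_bounded[OF hi X2_meas X2_bd] by (simp add: mult.commute)
    have cx: "(AE \<omega> in M. cexpX M X2 (\<lambda>\<omega>. h (Z \<omega>)) \<omega> = X2 \<omega>)
        \<longleftrightarrow> (\<integral>\<omega>. h (Z \<omega>) \<partial>M) = \<pi>bar \<and> (\<integral>\<omega>. h (Z \<omega>) * P \<omega> \<partial>M) = \<pi>bar"
    proof
      assume ae: "AE \<omega> in M. cexpX M X2 (\<lambda>\<omega>. h (Z \<omega>)) \<omega> = X2 \<omega>"
      have "(\<integral>\<omega>. h (Z \<omega>) \<partial>M) = (\<integral>\<omega>. real_cond_exp M FX (\<lambda>\<omega>. h (Z \<omega>)) \<omega> \<partial>M)"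
        using SX.real_cond_exp_int(2)[OF hi] by simp
      also have "\<dots> = (\<integral>\<omega>. X2 \<omega> \<partial>M)"
        by (rule integral_cong_AE) (use ae in \<open>auto simp: cexpX_def FX_def\<close>)
      finally have 1: "(\<integral>\<omega>. h (Z \<omega>) \<partial>M) = \<pi>bar" using pibar_int by simp
      have "(\<integral>\<omega>. X2 \<omega> * h (Z \<omega>) \<partial>M) = (\<integral>\<omega>. X2 \<omega> * real_cond_exp M FX (\<lambda>\<omega>. h (Z \<omega>)) \<omega> \<partial>M)"
        by (rule SX.real_cond_exp_intg(2)[symmetric, OF xhi X2F hM])
      also have "\<dots> = (\<integral>\<omega>. X2 \<omega> * X2 \<omega> \<partial>M)"
        by (rule integral_cong_AE) (use ae in \<open>auto simp: cexpX_def FX_def\<close>)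
      finally have "(\<integral>\<omega>. h (Z \<omega>) * X2 \<omega> \<partial>M) = \<pi>bar" using EX2X2 by (simp add: mult.commute)
      then have 2: "(\<integral>\<omega>. h (Z \<omega>) * P \<omega> \<partial>M) = \<pi>bar" using aXZ[OF hm hi] by simp
      show "(\<integral>\<omega>. h (Z \<omega>) \<partial>M) = \<pi>bar \<and> (\<integral>\<omega>. h (Z \<omega>) * P \<omega> \<partial>M) = \<pi>bar" using 1 2 by simp
    next
      assume c: "(\<integral>\<omega>. h (Z \<omega>) \<partial>M) = \<pi>bar \<and> (\<integral>\<omega>. h (Z \<omega>) * P \<omega> \<partial>M) = \<pi>bar"
      have c2: "(\<integral>\<omega>. X2 \<omega> * h (Z \<omega>) \<partial>M) = \<pi>bar"
        using c aXZ[OF hm hi] by (simp add: mult.commute)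
      have "AE \<omega> in M. real_cond_exp M FX (\<lambda>\<omega>. h (Z \<omega>)) \<omega> = X2 \<omega>"
      proof (rule SX.real_cond_exp_charact[OF _ hi X2_int X2F])
        fix A assume "A \<in> sets FX"
        then obtain B where B: "A = Xvec X2 -` B \<inter> space M" using setsFX by blast
        show "(\<integral>\<omega>\<in>A. h (Z \<omega>) \<partial>M) = (\<integral>\<omega>\<in>A. X2 \<omega> \<partial>M)"
          unfolding setint[OF hi B] setint[OF X2_int B] using c c2 EX2X2 pibar_int by simp
      qed
      then show "AE \<omega> in M. cexpX M X2 (\<lambda>\<omega>. h (Z \<omega>)) \<omega> = X2 \<omega>"
        by (simp add: cexpX_def FX_def)
    qed
    show ?thesis unfolding solves_def using L2 cx by simp
  qed

  define H where "H = (\<lambda>\<omega>. \<alpha> + \<gamma> * P \<omega>)"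
  have H_meas[measurable]: "H \<in> borel_measurable M" unfolding H_def by measurable
  have H_int: "integrable M H" unfolding H_def using P_int by simp
  have HP_eq: "(\<lambda>\<omega>. H \<omega> * P \<omega>) = (\<lambda>\<omega>. \<alpha> * P \<omega> + \<gamma> * (P \<omega> * P \<omega>))"
    unfolding H_def by (auto simp: algebra_simps)
  have HP_int: "integrable M (\<lambda>\<omega>. H \<omega> * P \<omega>)" unfolding HP_eq using P_int PP_int by simp
  have HH_eq: "(\<lambda>\<omega>. (H \<omega>)\<^sup>2) = (\<lambda>\<omega>. \<alpha> * H \<omega> + \<gamma> * (H \<omega> * P \<omega>))"
    unfolding H_def by (auto simp: algebra_simps power2_eq_square)
  have HH_int: "integrable M (\<lambda>\<omega>. (H \<omega>)\<^sup>2)" unfolding HH_eq using H_int HP_int by simp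
  have vpos: "m2 - \<pi>bar\<^sup>2 > 0" using var_pos varP' by simp
  have gv: "\<gamma> * (m2 - \<pi>bar\<^sup>2) = \<pi>bar * (1 - \<pi>bar)"
    using vpos unfolding \<gamma>_def varP' by simp
  have EH: "(\<integral>\<omega>. H \<omega> \<partial>M) = \<pi>bar"
    unfolding H_def using P_int EP p1 by (simp add: \<alpha>_def algebra_simps)
  have EHP: "(\<integral>\<omega>. H \<omega> * P \<omega> \<partial>M) = \<pi>bar"
  proof -
    have "(\<integral>\<omega>. H \<omega> * P \<omega> \<partial>M) = \<alpha> * \<pi>bar + \<gamma> * m2"
      unfolding HP_eq using P_int PP_int EP EPP by simp
    also have "\<dots> = \<pi>bar" using gv unfolding \<alpha>_def by (simp add: algebra_simps power2_eq_square)
    finally show ?thesis .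
  qed
  have EHH: "(\<integral>\<omega>. (H \<omega>)\<^sup>2 \<partial>M) = \<alpha> * \<pi>bar + \<gamma> * \<pi>bar"
    unfolding HH_eq using H_int HP_int EH EHP by simp
  have h0Z: "(\<lambda>\<omega>. (\<lambda>z. \<alpha> + \<gamma> * \<pi> z) (Z \<omega>)) = H" unfolding H_def P_def by simp
  have L2h0: "L2Z M Z N (\<lambda>z. \<alpha> + \<gamma> * \<pi> z)"
    unfolding L2Z_def using HH_int by (simp add: H_def P_def)
  have sol_h0: "solves M X2 Z N X2 (\<lambda>z. \<alpha> + \<gamma> * \<pi> z)"
    using solves_iff[OF L2h0] EH EHP by (simp add: H_def P_def)
  have gap: "(\<integral>\<omega>. (h (Z \<omega>) - H \<omega>)\<^sup>2 \<partial>M) = (\<integral>\<omega>. (h (Z \<omega>))\<^sup>2 \<partial>M) - (\<integral>\<omega>. (H \<omega>)\<^sup>2 \<partial>M)"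
    and gap_int: "integrable M (\<lambda>\<omega>. (h (Z \<omega>) - H \<omega>)\<^sup>2)"
    if sol: "solves M X2 Z N X2 h" for h
  proof -
    have L2: "L2Z M Z N h" using sol unfolding solves_def by simp
    have hm[measurable]: "h \<in> borel_measurable N" using L2 unfolding L2Z_def by simp
    have hM[measurable]: "(\<lambda>\<omega>. h (Z \<omega>)) \<in> borel_measurable M" by measurable
    have hh: "integrable M (\<lambda>\<omega>. (h (Z \<omega>))\<^sup>2)" using L2 unfolding L2Z_def by simp
    have hi: "integrable M (\<lambda>\<omega>. h (Z \<omega>))"
      by (rule sq_integrable_imp_integrable[OF prob hM hh])
    have hP: "integrable M (\<lambda>\<omega>. h (Z \<omega>) * P \<omega>)" by (rule integrable_mult_bounded[OF hi P_meas P_bd1])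
    have c: "(\<integral>\<omega>. h (Z \<omega>) \<partial>M) = \<pi>bar" "(\<integral>\<omega>. h (Z \<omega>) * P \<omega> \<partial>M) = \<pi>bar"
      using solves_iff[OF L2] sol by auto
    have eq: "(\<lambda>\<omega>. (h (Z \<omega>) - H \<omega>)\<^sup>2) = (\<lambda>\<omega>. ((h (Z \<omega>))\<^sup>2 - (2 * \<alpha>) * h (Z \<omega>)
       - (2 * \<gamma>) * (h (Z \<omega>) * P \<omega>)) + (H \<omega>)\<^sup>2)"
      unfolding H_def by (auto simp: algebra_simps power2_eq_square)
    show "integrable M (\<lambda>\<omega>. (h (Z \<omega>) - H \<omega>)\<^sup>2)" unfolding eq using hh hi hP HH_int by simp
    have "(\<integral>\<omega>. (h (Z \<omega>) - H \<omega>)\<^sup>2 \<partial>M) = (\<integral>\<omega>. (h (Z \<omega>))\<^sup>2 \<partial>M) - 2 * \<alpha> * \<pi>bar - 2 * \<gamma> * \<pi>bar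
       + (\<integral>\<omega>. (H \<omega>)\<^sup>2 \<partial>M)"
      unfolding eq using hh hi hP HH_int c by (simp add: integral_add integral_diff)
    then show "(\<integral>\<omega>. (h (Z \<omega>) - H \<omega>)\<^sup>2 \<partial>M) = (\<integral>\<omega>. (h (Z \<omega>))\<^sup>2 \<partial>M) - (\<integral>\<omega>. (H \<omega>)\<^sup>2 \<partial>M)"
      using EHH by simp
  qed
  have minimal: "(\<integral>\<omega>. (H \<omega>)\<^sup>2 \<partial>M) \<le> (\<integral>\<omega>. (h (Z \<omega>))\<^sup>2 \<partial>M)"
    if sol: "solves M X2 Z N X2 h" for h
    using gap[OF sol] integral_nonneg_AE[of "\<lambda>\<omega>. (h (Z \<omega>) - H \<omega>)\<^sup>2" M] by simp
  have part_min: "min_norm_solution M X2 Z N X2 (\<lambda>z. \<alpha> + \<gamma> * \<pi> z)"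
    unfolding min_norm_solution_def using sol_h0 minimal by (simp add: H_def P_def)
  have part_uniq: "\<forall>h0. min_norm_solution M X2 Z N X2 h0 \<longrightarrow>
              (AE \<omega> in M. h0 (Z \<omega>) = \<alpha> + \<gamma> * \<pi> (Z \<omega>))"
  proof (intro allI impI)
    fix h0 assume mn: "min_norm_solution M X2 Z N X2 h0"
    then have sol: "solves M X2 Z N X2 h0" and le: "(\<integral>\<omega>. (h0 (Z \<omega>))\<^sup>2 \<partial>M) \<le> (\<integral>\<omega>. (H \<omega>)\<^sup>2 \<partial>M)"
      unfolding min_norm_solution_def using sol_h0 by (auto simp: H_def P_def)
    have L2: "L2Z M Z N h0" using sol unfolding solves_def by simp
    have hm[measurable]: "h0 \<in> borel_measurable N" using L2 unfolding L2Z_def by simp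
    have "(\<integral>\<omega>. (h0 (Z \<omega>) - H \<omega>)\<^sup>2 \<partial>M) \<le> 0" using gap[OF sol] le by simp
    moreover have "(\<integral>\<omega>. (h0 (Z \<omega>) - H \<omega>)\<^sup>2 \<partial>M) \<ge> 0" by (rule integral_nonneg_AE) simp
    ultimately have "(\<integral>\<omega>. (h0 (Z \<omega>) - H \<omega>)\<^sup>2 \<partial>M) = 0" by simp
    then have "AE \<omega> in M. (h0 (Z \<omega>) - H \<omega>)\<^sup>2 = 0"
      using integral_nonneg_eq_0_iff_AE[OF gap_int[OF sol]] by simp
    then show "AE \<omega> in M. h0 (Z \<omega>) = \<alpha> + \<gamma> * \<pi> (Z \<omega>)"
      by eventually_elim (simp add: H_def P_def)
  qed
  have part_ex: "\<exists>h1 h2. solves M X2 Z N (\<lambda>\<omega>. 1) h1 \<and> solves M X2 Z N X2 h2"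
  proof (intro exI conjI)
    show "solves M X2 Z N X2 (\<lambda>z. \<alpha> + \<gamma> * \<pi> z)" by (rule sol_h0)
    have "AE \<omega> in M. real_cond_exp M FX (\<lambda>\<omega>. 1) \<omega> = 1"
      by (rule SX.real_cond_exp_F_meas) auto
    then show "solves M X2 Z N (\<lambda>\<omega>. 1) (\<lambda>_. 1)"
      unfolding solves_def L2Z_def cexpX_def FX_def by simp
  qed

  define c0 where "c0 = g (vector [1, 0])"
  define d where "d = g (vector [1, 1]) - c0"
  have gX: "g (Xvec X2 \<omega>) = c0 + d * X2 \<omega>" if "\<omega> \<in> space M" for \<omega>
    using X2_bin that by (auto simp: Xvec_def c0_def d_def)
  have X1: "Xvec X2 \<omega> $ 1 = 1" and X2c: "Xvec X2 \<omega> $ 2 = X2 \<omega>" for \<omega>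
    by (simp_all add: Xvec_def)
  have gX_meas[measurable]: "(\<lambda>\<omega>. g (Xvec X2 \<omega>)) \<in> borel_measurable M" by measurable
  have gX_int: "integrable M (\<lambda>\<omega>. g (Xvec X2 \<omega>))"
    by (rule sq_integrable_imp_integrable[OF prob gX_meas g_L2])
  have Y_int: "integrable M Y" by (rule sq_integrable_imp_integrable[OF prob Y_meas Y_sq])
  have X2P_int: "integrable M (\<lambda>\<omega>. X2 \<omega> * P \<omega>)" by (rule integrable_mult_bounded[OF X2_int P_meas P_bd1])
  have EgX: "(\<integral>\<omega>. g (Xvec X2 \<omega>) \<partial>M) = c0 + d * \<pi>bar"
  proof -
    have "(\<integral>\<omega>. g (Xvec X2 \<omega>) \<partial>M) = (\<integral>\<omega>. c0 + d * X2 \<omega> \<partial>M)"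
      by (rule Bochner_Integration.integral_cong) (auto simp: gX)
    also have "\<dots> = c0 + d * \<pi>bar" using X2_int p1 pibar_int by simp
    finally show ?thesis .
  qed
  have EX2gX: "(\<integral>\<omega>. X2 \<omega> * g (Xvec X2 \<omega>) \<partial>M) = c0 * \<pi>bar + d * \<pi>bar"
  proof -
    have "(\<integral>\<omega>. X2 \<omega> * g (Xvec X2 \<omega>) \<partial>M) = (\<integral>\<omega>. c0 * X2 \<omega> + d * (X2 \<omega> * X2 \<omega>) \<partial>M)"
      by (rule Bochner_Integration.integral_cong) (auto simp: gX algebra_simps)
    also have "\<dots> = c0 * \<pi>bar + d * \<pi>bar"
      using X2_int integrable_mult_bounded[OF X2_int X2_meas X2_bd] pibar_int EX2X2 by simp
    finally show ?thesis .
  qed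
  define A where "A = (\<chi> i j. \<integral>\<omega>. Xvec X2 \<omega> $ i * Xvec X2 \<omega> $ j \<partial>M)"
  define bv where "bv = (\<chi> i. \<integral>\<omega>. Xvec X2 \<omega> $ i * g (Xvec X2 \<omega>) \<partial>M)"
  have A11: "A $ 1 $ 1 = 1" and A12: "A $ 1 $ 2 = \<pi>bar" and A21: "A $ 2 $ 1 = \<pi>bar"
    and A22: "A $ 2 $ 2 = \<pi>bar"
    unfolding A_def using p1 pibar_int EX2X2 by (simp_all add: X1 X2c)
  have bv1: "bv $ 1 = c0 + d * \<pi>bar" and bv2: "bv $ 2 = c0 * \<pi>bar + d * \<pi>bar"
    unfolding bv_def using EgX EX2gX by (simp_all add: X1 X2c)
  have Av: "A *v vector [c0, d] = bv"
    unfolding vec_eq_iff forall_2 matrix_vector_mult_def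
    by (simp add: sum_2 A11 A12 A21 A22 bv1 bv2 algebra_simps)
  have "det A \<noteq> 0"
  proof -
    have "det A = \<pi>bar * (1 - \<pi>bar)" unfolding det_2 A11 A12 A21 A22 by (simp add: algebra_simps)
    then show ?thesis using \<pi>bar_pos \<pi>bar_lt1 by simp
  qed
  then have "invertible A" by (simp add: invertible_det_nz)
  then have "\<exists>A'. A ** A' = mat 1 \<and> A' ** A = mat 1" unfolding invertible_def .
  then have inv: "matrix_inv A ** A = mat 1" unfolding matrix_inv_def by (rule someI2_ex) simp
  have beta_v: "\<beta> = vector [c0, d]"
  proof -
    have "\<beta> = matrix_inv A *v (A *v vector [c0, d])" using Av unfolding \<beta>_def A_def bv_def by simp
    also have "\<dots> = vector [c0, d]" by (simp add: matrix_vector_mul_assoc inv)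
    finally show ?thesis .
  qed
  define eps where "eps = (\<lambda>\<omega>. Y \<omega> - g (Xvec X2 \<omega>))"
  have eps_meas[measurable]: "eps \<in> borel_measurable M" unfolding eps_def by measurable
  have eps_int: "integrable M eps" unfolding eps_def using Y_int gX_int by simp
  have eps_ae: "AE \<omega> in M. real_cond_exp M FZ eps \<omega> = 0"
    using model unfolding cexpZ_def FZ_def eps_def .
  have Eeps: "(\<integral>\<omega>. eps \<omega> \<partial>M) = 0"
  proof -
    have "(\<integral>\<omega>. eps \<omega> \<partial>M) = (\<integral>\<omega>. real_cond_exp M FZ eps \<omega> \<partial>M)"
      using SZ.real_cond_exp_int(2)[OF eps_int] by simp
    also have "\<dots> = (\<integral>\<omega>. 0 \<partial>M)" by (rule integral_cong_AE) (use eps_ae in auto)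
    finally show ?thesis by simp
  qed
  have Peps_int: "integrable M (\<lambda>\<omega>. P \<omega> * eps \<omega>)"
    using integrable_mult_bounded[OF eps_int P_meas P_bd1] by (simp add: mult.commute)
  have EPeps: "(\<integral>\<omega>. P \<omega> * eps \<omega> \<partial>M) = 0"
  proof -
    have "(\<integral>\<omega>. P \<omega> * eps \<omega> \<partial>M) = (\<integral>\<omega>. P \<omega> * real_cond_exp M FZ eps \<omega> \<partial>M)"
      by (rule SZ.real_cond_exp_intg(2)[symmetric, OF Peps_int PF eps_meas])
    also have "\<dots> = (\<integral>\<omega>. 0 \<partial>M)" by (rule integral_cong_AE) (use eps_ae in auto)
    finally show ?thesis by simp
  qed
  have EY: "(\<integral>\<omega>. Y \<omega> \<partial>M) = c0 + d * \<pi>bar"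
  proof -
    have "(\<integral>\<omega>. Y \<omega> \<partial>M) = (\<integral>\<omega>. eps \<omega> + g (Xvec X2 \<omega>) \<partial>M)" by (simp add: eps_def)
    also have "\<dots> = c0 + d * \<pi>bar" using eps_int gX_int Eeps EgX by simp
    finally show ?thesis .
  qed
  have YP_int: "integrable M (\<lambda>\<omega>. Y \<omega> * P \<omega>)" by (rule integrable_mult_bounded[OF Y_int P_meas P_bd1])
  have EYP: "(\<integral>\<omega>. Y \<omega> * P \<omega> \<partial>M) = c0 * \<pi>bar + d * m2"
  proof -
    have "(\<integral>\<omega>. Y \<omega> * P \<omega> \<partial>M) = (\<integral>\<omega>. P \<omega> * eps \<omega> + (c0 * P \<omega> + d * (P \<omega> * X2 \<omega>)) \<partial>M)"
      by (rule Bochner_Integration.integral_cong) (auto simp: eps_def gX algebra_simps)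
    also have "\<dots> = c0 * \<pi>bar + d * m2"
      using Peps_int P_int X2P_int EPeps EP unfolding m2_def by (simp add: mult.commute)
    finally show ?thesis .
  qed
  have covY: "cov M Y (\<lambda>\<omega>. \<pi> (Z \<omega>)) = d * (m2 - \<pi>bar\<^sup>2)"
    using cov_expand[OF prob Y_int P_int YP_int] EYP EY EP unfolding P_def
    by (simp add: algebra_simps power2_eq_square)
  have covX: "cov M X2 (\<lambda>\<omega>. \<pi> (Z \<omega>)) = m2 - \<pi>bar\<^sup>2"
    using cov_expand[OF prob X2_int P_int X2P_int] EP pibar_int unfolding P_def m2_def
    by (simp add: algebra_simps power2_eq_square)
  have aIV: "\<alpha>IV = d" unfolding \<alpha>IV_def covY covX using vpos by simp
  have cIV: "cIV = c0" unfolding cIV_def aIV EY by simp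
  show ?thesis using part_ex part_min part_uniq beta_v aIV cIV by simp
qed

end
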